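(* Let $G$ be a finite group with a normal subgroup $H\cong D_n$ such that $G/H\cong(\mathbb Z/2)^2$, and let $c_4>2$. Then there is no admissible homomorphism $f:T(2,2,2,c_4)\to G$ for cover type III-c, i.e. there is no surjective homomorphism $f:T(2,2,2,c_4)\to G$ such that $f(\gamma_1),f(\gamma_2),f(\gamma_3)$ have order $2$, $f(\gamma_4)$ has order $c_4$, $\pi_H(f(\gamma_i))\neq 1$ for $i=1,2,3$ and $\pi_H(f(\gamma_4))=1$.
   Context: $D_n=\langle x,y\mid x^n=y^2=1,\ yxy^{-1}=x^{-1}\rangle$. $T(2,2,2,c_4):=\langle\gamma_1,\dots,\gamma_4\mid \gamma_1\gamma_2\gamma_3\gamma_4=1,\ \gamma_1^2=\gamma_2^2=\gamma_3^2=\gamma_4^{c_4}=1\rangle$. $\pi_H:G\to G/H$ is the quotient map; the condition on $\pi_H\circ f$ expresses that $H$ corresponds to the genus zero $(\mathbb Z/2)^2$-cover of $\mathbb P^1$ branched at the first three of the four branch points with branching index 2. *)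

theory Defs
  imports "HOL-Algebra.Algebra"
begin

text \<open>The dihedral group D_n of order 2n (n >= 1), realised concretely: the pair (a, e)
  stands for x^a y^e, with 0 <= a < n.  Then
  (x^a y^e)(x^b y^f) = x^(a + (-1)^e b) y^(e+f).\<close>
definition dihedral_group :: "nat \<Rightarrow> (int \<times> bool) monoid" where
  "dihedral_group n =
     \<lparr> carrier = {0..<int n} \<times> UNIV,
       monoid.mult = (\<lambda>(a, e) (b, f). ((a + (if e then - b else b)) mod int n, e \<noteq> f)),
       one = (0, False) \<rparr>"

definition klein_four :: "(int \<times> int) monoid" where
  "klein_four = integer_mod_group 2 \<times>\<times> integer_mod_group 2"

end

theory Submission
  imports Defs
begin

lemma arith1: "0 \<le> (a::int) \<Longrightarrow> a < m \<Longrightarrow> a = (a + a) mod m \<Longrightarrow> a = 0"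
proof (cases "a + a < m")
  case True
  assume "0 \<le> a" "a = (a + a) mod m"
  then show ?thesis using True by simp
next
  case False
  assume h: "0 \<le> a" "a < m" "a = (a + a) mod m"
  then have "(a + a) mod m = a + a - m" using False
  proof -
    have "(a + a) mod m = (a + a - m) mod m" by (simp add: mod_diff_right_eq[symmetric])
    also have "\<dots> = a + a - m" using False h by (intro mod_pos_pos_trivial) auto
    finally show ?thesis .
  qed
  then show ?thesis using h by simp
qed

lemma arith2: "((b::int) + - a) mod m = (a + b) mod m \<Longrightarrow> (a + a) mod m = 0"
proof -
  assume "(b + - a) mod m = (a + b) mod m"
  then have "m dvd (a + b) - (b + - a)" by (metis mod_eq_dvd_iff)
  then show ?thesis by (simp add: algebra_simps)
qed

lemma dih_mult: "(a,e) \<otimes>\<^bsub>dihedral_group n\<^esub> (b,f) = ((a + (if e then -b else b)) mod int n, e \<noteq> f)"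
  by (simp add: dihedral_group_def)

lemma klein_gen:
  assumes "group Q" "A \<in> carrier Q" "B \<in> carrier Q" "C \<in> carrier Q"
    "A \<otimes>\<^bsub>Q\<^esub> A = \<one>\<^bsub>Q\<^esub>" "B \<otimes>\<^bsub>Q\<^esub> B = \<one>\<^bsub>Q\<^esub>" "C \<otimes>\<^bsub>Q\<^esub> C = \<one>\<^bsub>Q\<^esub>"
    "A \<otimes>\<^bsub>Q\<^esub> B \<otimes>\<^bsub>Q\<^esub> C = \<one>\<^bsub>Q\<^esub>"
  shows "generate Q {A, B, C, \<one>\<^bsub>Q\<^esub>} \<subseteq> {\<one>\<^bsub>Q\<^esub>, A, B, A \<otimes>\<^bsub>Q\<^esub> B}"
proof -
  interpret Q: group Q by fact
  have iA: "inv\<^bsub>Q\<^esub> A = A" using assms Q.inv_char by metis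
  have iB: "inv\<^bsub>Q\<^esub> B = B" using assms Q.inv_char by metis
  have iC: "inv\<^bsub>Q\<^esub> C = C" using assms Q.inv_char by metis
  have "C = inv\<^bsub>Q\<^esub> (A \<otimes>\<^bsub>Q\<^esub> B)"
    using assms Q.inv_char by (metis Q.m_closed Q.inv_equality) 
  then have Cd: "C = B \<otimes>\<^bsub>Q\<^esub> A" using assms iA iB by (simp add: Q.inv_mult_group)
  have comm: "B \<otimes>\<^bsub>Q\<^esub> A = A \<otimes>\<^bsub>Q\<^esub> B"
  proof -
    have "B \<otimes>\<^bsub>Q\<^esub> A = inv\<^bsub>Q\<^esub> (B \<otimes>\<^bsub>Q\<^esub> A)" using iC Cd by simp
    also have "\<dots> = A \<otimes>\<^bsub>Q\<^esub> B" using assms iA iB by (simp add: Q.inv_mult_group)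
    finally show ?thesis .
  qed
  have AAB: "A \<otimes>\<^bsub>Q\<^esub> (A \<otimes>\<^bsub>Q\<^esub> B) = B" using assms by (simp add: Q.m_assoc[symmetric])
  have ABB: "A \<otimes>\<^bsub>Q\<^esub> B \<otimes>\<^bsub>Q\<^esub> B = A" using assms by (simp add: Q.m_assoc)
  have BAB: "B \<otimes>\<^bsub>Q\<^esub> (A \<otimes>\<^bsub>Q\<^esub> B) = A" using assms comm by (metis ABB Q.m_assoc)
  have ABA: "A \<otimes>\<^bsub>Q\<^esub> B \<otimes>\<^bsub>Q\<^esub> A = B" using assms comm by (metis AAB Q.m_assoc)
  have ABAB: "A \<otimes>\<^bsub>Q\<^esub> B \<otimes>\<^bsub>Q\<^esub> (A \<otimes>\<^bsub>Q\<^esub> B) = \<one>\<^bsub>Q\<^esub>"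
    using assms by (metis ABA Q.m_assoc Q.m_closed)
  show ?thesis
  proof
    fix x assume "x \<in> generate Q {A, B, C, \<one>\<^bsub>Q\<^esub>}"
    then show "x \<in> {\<one>\<^bsub>Q\<^esub>, A, B, A \<otimes>\<^bsub>Q\<^esub> B}"
    proof induction
      case one then show ?case by simp
    next
      case (incl h) then show ?case using Cd comm by auto
    next
      case (inv h) then show ?case using Cd comm iA iB iC by auto
    next
      case (eng h1 h2)
      from eng.IH show ?case using assms
        by (elim insertE emptyE; simp add: comm AAB ABB BAB ABA ABAB)
    qed
  qed
qed


theorem lemma5p9:
  fixes G :: "('g, 'b) monoid_scheme" and H :: "'g set" and n c4 :: nat
  assumes "group G"
    and "finite (carrier G)"
    and "H \<lhd> G"
    and "G\<lparr>carrier := H\<rparr> \<cong> dihedral_group n"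
    and "G Mod H \<cong> klein_four"
    and "c4 > 2"
  shows "\<not> (\<exists>g1 g2 g3 g4.
            g1 \<in> carrier G \<and> g2 \<in> carrier G \<and> g3 \<in> carrier G \<and> g4 \<in> carrier G \<and>
            g1 \<otimes>\<^bsub>G\<^esub> g2 \<otimes>\<^bsub>G\<^esub> g3 \<otimes>\<^bsub>G\<^esub> g4 = \<one>\<^bsub>G\<^esub> \<and>
            g1 [^]\<^bsub>G\<^esub> (2::nat) = \<one>\<^bsub>G\<^esub> \<and> g2 [^]\<^bsub>G\<^esub> (2::nat) = \<one>\<^bsub>G\<^esub> \<and>
            g3 [^]\<^bsub>G\<^esub> (2::nat) = \<one>\<^bsub>G\<^esub> \<and> g4 [^]\<^bsub>G\<^esub> c4 = \<one>\<^bsub>G\<^esub> \<and>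
            generate G {g1, g2, g3, g4} = carrier G \<and>
            group.ord G g1 = 2 \<and> group.ord G g2 = 2 \<and> group.ord G g3 = 2 \<and>
            group.ord G g4 = c4 \<and>
            H #>\<^bsub>G\<^esub> g1 \<noteq> H \<and> H #>\<^bsub>G\<^esub> g2 \<noteq> H \<and> H #>\<^bsub>G\<^esub> g3 \<noteq> H \<and>
            H #>\<^bsub>G\<^esub> g4 = H)"
proof
  let ?D = "dihedral_group n"
  assume "\<exists>g1 g2 g3 g4.
            g1 \<in> carrier G \<and> g2 \<in> carrier G \<and> g3 \<in> carrier G \<and> g4 \<in> carrier G \<and>
            g1 \<otimes>\<^bsub>G\<^esub> g2 \<otimes>\<^bsub>G\<^esub> g3 \<otimes>\<^bsub>G\<^esub> g4 = \<one>\<^bsub>G\<^esub> \<and>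
            g1 [^]\<^bsub>G\<^esub> (2::nat) = \<one>\<^bsub>G\<^esub> \<and> g2 [^]\<^bsub>G\<^esub> (2::nat) = \<one>\<^bsub>G\<^esub> \<and>
            g3 [^]\<^bsub>G\<^esub> (2::nat) = \<one>\<^bsub>G\<^esub> \<and> g4 [^]\<^bsub>G\<^esub> c4 = \<one>\<^bsub>G\<^esub> \<and>
            generate G {g1, g2, g3, g4} = carrier G \<and>
            group.ord G g1 = 2 \<and> group.ord G g2 = 2 \<and> group.ord G g3 = 2 \<and>
            group.ord G g4 = c4 \<and>
            H #>\<^bsub>G\<^esub> g1 \<noteq> H \<and> H #>\<^bsub>G\<^esub> g2 \<noteq> H \<and> H #>\<^bsub>G\<^esub> g3 \<noteq> H \<and>
            H #>\<^bsub>G\<^esub> g4 = H"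
  then obtain a b c d where
    abcd: "a \<in> carrier G" "b \<in> carrier G" "c \<in> carrier G" "d \<in> carrier G"
    and prod: "a \<otimes>\<^bsub>G\<^esub> b \<otimes>\<^bsub>G\<^esub> c \<otimes>\<^bsub>G\<^esub> d = \<one>\<^bsub>G\<^esub>"
    and sq: "a [^]\<^bsub>G\<^esub> (2::nat) = \<one>\<^bsub>G\<^esub>" "b [^]\<^bsub>G\<^esub> (2::nat) = \<one>\<^bsub>G\<^esub>"
            "c [^]\<^bsub>G\<^esub> (2::nat) = \<one>\<^bsub>G\<^esub>"
    and gen: "generate G {a, b, c, d} = carrier G"
    and ordd: "group.ord G d = c4"
    and dH: "H #>\<^bsub>G\<^esub> d = H"
    by blast
  interpret G: group G by fact
  interpret N: normal H G by fact
  have Hsub: "subgroup H G" by (rule N.subgroup_axioms)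
  from assms(4) obtain \<phi> where \<phi>: "\<phi> \<in> iso (G\<lparr>carrier := H\<rparr>) ?D"
    unfolding is_iso_def by auto
  have phom: "\<And>x y. x \<in> H \<Longrightarrow> y \<in> H \<Longrightarrow> \<phi> (x \<otimes>\<^bsub>G\<^esub> y) = \<phi> x \<otimes>\<^bsub>?D\<^esub> \<phi> y"
    using \<phi> unfolding iso_def hom_def by auto
  have bij: "bij_betw \<phi> H (carrier ?D)" using \<phi> by (simp add: iso_def)
  have cD: "carrier ?D = {0..<int n} \<times> UNIV" by (simp add: dihedral_group_def)
  have pin: "\<And>x. x \<in> H \<Longrightarrow> \<phi> x \<in> {0..<int n} \<times> UNIV"
    using bij cD by (auto simp: bij_betw_def)
  have inj: "\<And>x y. x \<in> H \<Longrightarrow> y \<in> H \<Longrightarrow> \<phi> x = \<phi> y \<Longrightarrow> x = y"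
    using bij by (auto simp: bij_betw_def inj_on_def)
  have HG: "\<And>x. x \<in> H \<Longrightarrow> x \<in> carrier G" using Hsub subgroup.subset by blast
  have Hm: "\<And>x y. x \<in> H \<Longrightarrow> y \<in> H \<Longrightarrow> x \<otimes>\<^bsub>G\<^esub> y \<in> H" using Hsub subgroup.m_closed by blast
  have H1: "\<one>\<^bsub>G\<^esub> \<in> H" using Hsub subgroup.one_closed by blast
  have p1: "\<phi> \<one>\<^bsub>G\<^esub> = (0, False)"
  proof -
    obtain a0 e0 where ae: "\<phi> \<one>\<^bsub>G\<^esub> = (a0, e0)" by fastforce
    have r: "0 \<le> a0" "a0 < int n" using pin[OF H1] ae by auto
    have "\<phi> \<one>\<^bsub>G\<^esub> = \<phi> \<one>\<^bsub>G\<^esub> \<otimes>\<^bsub>?D\<^esub> \<phi> \<one>\<^bsub>G\<^esub>" using phom[OF H1 H1] by simp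
    then have eq: "(a0, e0) = ((a0 + (if e0 then - a0 else a0)) mod int n, e0 \<noteq> e0)"
      by (simp only: ae dih_mult)
    then have "e0 = False" by simp
    with eq have "a0 = (a0 + a0) mod int n" by simp
    then have "a0 = 0" by (rule arith1[OF r])
    then show ?thesis using ae \<open>e0 = False\<close> by simp
  qed
  define R where "R = {x \<in> H. snd (\<phi> x) = False}"
  have snd_mult: "\<And>x y. x \<in> H \<Longrightarrow> y \<in> H \<Longrightarrow> snd (\<phi> (x \<otimes>\<^bsub>G\<^esub> y)) = (snd (\<phi> x) \<noteq> snd (\<phi> y))"
  proof -
    fix x y assume xy: "x \<in> H" "y \<in> H"
    obtain a1 e1 where 1: "\<phi> x = (a1, e1)" by fastforce
    obtain a2 e2 where 2: "\<phi> y = (a2, e2)" by fastforce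
    show "snd (\<phi> (x \<otimes>\<^bsub>G\<^esub> y)) = (snd (\<phi> x) \<noteq> snd (\<phi> y))"
      using phom[OF xy] 1 2 by (simp add: dih_mult)
  qed
  have refl_sq: "\<And>x. x \<in> H \<Longrightarrow> x \<notin> R \<Longrightarrow> x \<otimes>\<^bsub>G\<^esub> x = \<one>\<^bsub>G\<^esub>"
  proof -
    fix x assume x: "x \<in> H" "x \<notin> R"
    obtain a1 e1 where 1: "\<phi> x = (a1, e1)" by fastforce
    have "e1 = True" using x 1 by (auto simp: R_def)
    then have "\<phi> (x \<otimes>\<^bsub>G\<^esub> x) = (0, False)" using phom[OF x(1) x(1)] 1 by (simp add: dih_mult)
    then show "x \<otimes>\<^bsub>G\<^esub> x = \<one>\<^bsub>G\<^esub>" using inj[OF Hm[OF x(1) x(1)] H1] p1 by simp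
  qed
  have Rcomm: "\<And>x y. x \<in> R \<Longrightarrow> y \<in> R \<Longrightarrow> x \<otimes>\<^bsub>G\<^esub> y = y \<otimes>\<^bsub>G\<^esub> x"
  proof -
    fix x y assume xy: "x \<in> R" "y \<in> R"
    then have xyH: "x \<in> H" "y \<in> H" by (auto simp: R_def)
    obtain a1 e1 where 1: "\<phi> x = (a1, e1)" by fastforce
    obtain a2 e2 where 2: "\<phi> y = (a2, e2)" by fastforce
    have "e1 = False" "e2 = False" using xy 1 2 by (auto simp: R_def)
    then have "\<phi> (x \<otimes>\<^bsub>G\<^esub> y) = \<phi> (y \<otimes>\<^bsub>G\<^esub> x)"
      using phom[OF xyH] phom[OF xyH(2) xyH(1)] 1 2 by (simp add: dih_mult add.commute)
    then show "x \<otimes>\<^bsub>G\<^esub> y = y \<otimes>\<^bsub>G\<^esub> x" using inj Hm xyH by blast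
  qed
  have cent: "\<And>z y. z \<in> R \<Longrightarrow> z \<otimes>\<^bsub>G\<^esub> z \<noteq> \<one>\<^bsub>G\<^esub> \<Longrightarrow> y \<in> H \<Longrightarrow>
      y \<otimes>\<^bsub>G\<^esub> z = z \<otimes>\<^bsub>G\<^esub> y \<Longrightarrow> y \<in> R"
  proof (rule ccontr)
    fix z y assume z: "z \<in> R" "z \<otimes>\<^bsub>G\<^esub> z \<noteq> \<one>\<^bsub>G\<^esub>" and y: "y \<in> H"
      and yz: "y \<otimes>\<^bsub>G\<^esub> z = z \<otimes>\<^bsub>G\<^esub> y" and yR: "y \<notin> R"
    have zH: "z \<in> H" using z by (simp add: R_def)
    obtain a1 e1 where 1: "\<phi> z = (a1, e1)" by fastforce
    obtain a2 e2 where 2: "\<phi> y = (a2, e2)" by fastforce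
    have e: "e1 = False" "e2 = True" using z yR y 1 2 by (auto simp: R_def)
    have "\<phi> (y \<otimes>\<^bsub>G\<^esub> z) = \<phi> (z \<otimes>\<^bsub>G\<^esub> y)" using yz by simp
    then have "(a2 + - a1) mod int n = (a1 + a2) mod int n"
      using phom[OF y zH] phom[OF zH y] 1 2 e by (simp add: dih_mult)
    then have "(a1 + a1) mod int n = 0" by (rule arith2)
    then have "\<phi> (z \<otimes>\<^bsub>G\<^esub> z) = (0, False)" using phom[OF zH zH] 1 e by (simp add: dih_mult)
    then have "z \<otimes>\<^bsub>G\<^esub> z = \<one>\<^bsub>G\<^esub>" using inj[OF Hm[OF zH zH] H1] p1 by simp
    with z show False by simp
  qed
  have Rsub: "subgroup R G"
  proof (rule G.subgroupI)
    show "R \<subseteq> carrier G" using HG by (auto simp: R_def)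
    have "\<one>\<^bsub>G\<^esub> \<in> R" using H1 p1 by (simp add: R_def)
    then show "R \<noteq> {}" by blast
  next
    fix x assume x: "x \<in> R"
    then have xH: "x \<in> H" by (simp add: R_def)
    have iH: "inv\<^bsub>G\<^esub> x \<in> H" using Hsub xH subgroup.m_inv_closed by blast
    have "snd (\<phi> (inv\<^bsub>G\<^esub> x \<otimes>\<^bsub>G\<^esub> x)) = False" using HG[OF xH] p1 by simp
    then show "inv\<^bsub>G\<^esub> x \<in> R" using snd_mult[OF iH xH] x iH by (auto simp: R_def)
  next
    fix x y assume "x \<in> R" "y \<in> R"
    then show "x \<otimes>\<^bsub>G\<^esub> y \<in> R" using snd_mult Hm by (auto simp: R_def)
  qed
  have dH': "d \<in> H"
  proof -
    have "d \<in> H #>\<^bsub>G\<^esub> d" using abcd(4) H1 unfolding r_coset_def by force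
    with dH show ?thesis by simp
  qed
  have dd: "d \<otimes>\<^bsub>G\<^esub> d \<noteq> \<one>\<^bsub>G\<^esub>"
  proof
    assume "d \<otimes>\<^bsub>G\<^esub> d = \<one>\<^bsub>G\<^esub>"
    then have "d [^]\<^bsub>G\<^esub> (2::nat) = \<one>\<^bsub>G\<^esub>" using abcd(4) by (simp add: numeral_2_eq_2)
    then have "c4 dvd 2" using G.pow_eq_id[OF abcd(4)] ordd by simp
    with assms(6) show False using dvd_imp_le by fastforce
  qed
  have dR: "d \<in> R" using refl_sq[OF dH'] dd by blast
  have Rnorm: "R \<lhd> G"
    unfolding G.normal_inv_iff
  proof (intro conjI ballI)
    show "subgroup R G" by (rule Rsub)
  next
    fix g r assume g: "g \<in> carrier G" and r: "r \<in> R"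
    have rG: "r \<in> carrier G" "d \<in> carrier G" using r dR HG by (auto simp: R_def)
    let ?d' = "g \<otimes>\<^bsub>G\<^esub> d \<otimes>\<^bsub>G\<^esub> inv\<^bsub>G\<^esub> g"
    let ?r' = "g \<otimes>\<^bsub>G\<^esub> r \<otimes>\<^bsub>G\<^esub> inv\<^bsub>G\<^esub> g"
    have conj_mult: "\<And>x y. x \<in> carrier G \<Longrightarrow> y \<in> carrier G \<Longrightarrow>
        (g \<otimes>\<^bsub>G\<^esub> x \<otimes>\<^bsub>G\<^esub> inv\<^bsub>G\<^esub> g) \<otimes>\<^bsub>G\<^esub> (g \<otimes>\<^bsub>G\<^esub> y \<otimes>\<^bsub>G\<^esub> inv\<^bsub>G\<^esub> g)
        = g \<otimes>\<^bsub>G\<^esub> (x \<otimes>\<^bsub>G\<^esub> y) \<otimes>\<^bsub>G\<^esub> inv\<^bsub>G\<^esub> g"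
    proof -
      have c: "\<And>z. z \<in> carrier G \<Longrightarrow> inv\<^bsub>G\<^esub> g \<otimes>\<^bsub>G\<^esub> (g \<otimes>\<^bsub>G\<^esub> z) = z"
        using g by (simp add: G.m_assoc[symmetric])
      fix x y assume "x \<in> carrier G" "y \<in> carrier G"
      then show "(g \<otimes>\<^bsub>G\<^esub> x \<otimes>\<^bsub>G\<^esub> inv\<^bsub>G\<^esub> g) \<otimes>\<^bsub>G\<^esub> (g \<otimes>\<^bsub>G\<^esub> y \<otimes>\<^bsub>G\<^esub> inv\<^bsub>G\<^esub> g)
        = g \<otimes>\<^bsub>G\<^esub> (x \<otimes>\<^bsub>G\<^esub> y) \<otimes>\<^bsub>G\<^esub> inv\<^bsub>G\<^esub> g"
        using g c by (simp add: G.m_assoc)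
    qed
    have d'H: "?d' \<in> H" using N.inv_op_closed2 g dH' by blast
    have r'H: "?r' \<in> H" using N.inv_op_closed2 g r by (auto simp: R_def)
    have "?d' \<otimes>\<^bsub>G\<^esub> ?d' \<noteq> \<one>\<^bsub>G\<^esub>"
    proof
      assume "?d' \<otimes>\<^bsub>G\<^esub> ?d' = \<one>\<^bsub>G\<^esub>"
      then have "g \<otimes>\<^bsub>G\<^esub> (d \<otimes>\<^bsub>G\<^esub> d) \<otimes>\<^bsub>G\<^esub> inv\<^bsub>G\<^esub> g = \<one>\<^bsub>G\<^esub>" using conj_mult rG by simp
      then have "d \<otimes>\<^bsub>G\<^esub> d = \<one>\<^bsub>G\<^esub>" using g rG
        by (metis G.inv_closed G.m_closed G.r_inv G.r_one G.m_assoc G.l_inv G.l_one G.one_closed)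
      with dd show False by simp
    qed
    then have d'R: "?d' \<in> R" using refl_sq d'H by blast
    have "?r' \<otimes>\<^bsub>G\<^esub> ?d' = ?d' \<otimes>\<^bsub>G\<^esub> ?r'"
      using conj_mult rG Rcomm[OF r dR] by simp
    then show "?r' \<in> R" using cent[OF d'R] \<open>?d' \<otimes>\<^bsub>G\<^esub> ?d' \<noteq> \<one>\<^bsub>G\<^esub>\<close> r'H by blast
  qed
  have cardH: "card H = 2 * n"
  proof -
    have "card H = card (carrier ?D)" using bij by (rule bij_betw_same_card)
    also have "\<dots> = 2 * n" using cD by (simp add: card_cartesian_product)
    finally show ?thesis .
  qed
  have cardR: "card R = n"
  proof -
    have img: "\<phi> ` R = {0..<int n} \<times> {False}"
    proof
      show "\<phi> ` R \<subseteq> {0..<int n} \<times> {False}"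
        using pin by (force simp: R_def)
    next
      show "{0..<int n} \<times> {False} \<subseteq> \<phi> ` R"
      proof
        fix p assume p: "p \<in> {0..<int n} \<times> {False}"
        then have "p \<in> carrier ?D" using cD by auto
        moreover have "\<phi> ` H = carrier ?D" using bij by (simp add: bij_betw_def)
        ultimately obtain x where x: "x \<in> H" "\<phi> x = p" by (metis imageE)
        then have "x \<in> R" using p by (auto simp: R_def)
        with x show "p \<in> \<phi> ` R" by blast
      qed
    qed
    have "inj_on \<phi> R" using bij by (auto simp: bij_betw_def R_def intro: inj_on_subset)
    then have "card R = card (\<phi> ` R)" by (simp add: card_image)
    also have "\<dots> = n" using img by (simp add: card_cartesian_product)
    finally show ?thesis .
  qed
  have ordG: "order G = 4 * card H"
  proof -
    have "card (rcosets\<^bsub>G\<^esub> H) * card H = order G" by (rule G.lagrange[OF Hsub])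
    moreover have "card (carrier (G Mod H)) = card (carrier klein_four)"
      by (rule iso_same_card[OF assms(5)])
    moreover have "carrier (G Mod H) = rcosets\<^bsub>G\<^esub> H" by (simp add: FactGroup_def)
    moreover have "card (carrier klein_four) = 4"
      by (simp add: klein_four_def carrier_integer_mod_group card_cartesian_product)
    ultimately show ?thesis by simp
  qed
  interpret Rn: normal R G by (rule Rnorm)
  let ?Q = "G Mod R"
  let ?\<pi> = "\<lambda>x. R #>\<^bsub>G\<^esub> x"
  have grpQ: "group ?Q" by (rule Rn.factorgroup_is_group)
  have hom: "?\<pi> \<in> hom G ?Q" by (rule Rn.r_coset_hom_Mod)
  interpret gh: group_hom G ?Q ?\<pi>
    using grpQ hom by (simp add: group_hom_def group_hom_axioms_def G.group_axioms)
  have sq2: "\<And>x. x \<in> carrier G \<Longrightarrow> x [^]\<^bsub>G\<^esub> (2::nat) = x \<otimes>\<^bsub>G\<^esub> x"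
    by (simp add: numeral_2_eq_2)
  have aa: "?\<pi> a \<otimes>\<^bsub>?Q\<^esub> ?\<pi> a = \<one>\<^bsub>?Q\<^esub>"
    using gh.hom_mult[OF abcd(1) abcd(1)] sq(1) sq2[OF abcd(1)] gh.hom_one by simp
  have bb: "?\<pi> b \<otimes>\<^bsub>?Q\<^esub> ?\<pi> b = \<one>\<^bsub>?Q\<^esub>"
    using gh.hom_mult[OF abcd(2) abcd(2)] sq(2) sq2[OF abcd(2)] gh.hom_one by simp
  have cc: "?\<pi> c \<otimes>\<^bsub>?Q\<^esub> ?\<pi> c = \<one>\<^bsub>?Q\<^esub>"
    using gh.hom_mult[OF abcd(3) abcd(3)] sq(3) sq2[OF abcd(3)] gh.hom_one by simp
  have pd: "?\<pi> d = \<one>\<^bsub>?Q\<^esub>"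
    using subgroup.rcos_const[OF Rsub G.is_group dR] by simp
  have Ain: "?\<pi> a \<in> carrier ?Q" "?\<pi> b \<in> carrier ?Q" "?\<pi> c \<in> carrier ?Q"
    using abcd gh.hom_closed by auto
  have abc: "?\<pi> a \<otimes>\<^bsub>?Q\<^esub> ?\<pi> b \<otimes>\<^bsub>?Q\<^esub> ?\<pi> c = \<one>\<^bsub>?Q\<^esub>"
  proof -
    have "?\<pi> (a \<otimes>\<^bsub>G\<^esub> b \<otimes>\<^bsub>G\<^esub> c \<otimes>\<^bsub>G\<^esub> d) = ?\<pi> a \<otimes>\<^bsub>?Q\<^esub> ?\<pi> b \<otimes>\<^bsub>?Q\<^esub> ?\<pi> c \<otimes>\<^bsub>?Q\<^esub> ?\<pi> d"
      using abcd by (simp add: gh.hom_mult)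
    then have "\<one>\<^bsub>?Q\<^esub> = ?\<pi> a \<otimes>\<^bsub>?Q\<^esub> ?\<pi> b \<otimes>\<^bsub>?Q\<^esub> ?\<pi> c \<otimes>\<^bsub>?Q\<^esub> \<one>\<^bsub>?Q\<^esub>"
      using prod pd gh.hom_one by simp
    then show ?thesis using Ain group.is_monoid[OF grpQ] monoid.r_one monoid.m_closed
      by metis
  qed
  have "carrier ?Q = ?\<pi> ` carrier G" by (rule carrier_FactGroup)
  also have "\<dots> = ?\<pi> ` generate G {a, b, c, d}" using gen by simp
  also have "\<dots> = generate ?Q (?\<pi> ` {a, b, c, d})"
    using abcd by (intro gh.generate_img[symmetric]) auto
  also have "?\<pi> ` {a, b, c, d} = {?\<pi> a, ?\<pi> b, ?\<pi> c, \<one>\<^bsub>?Q\<^esub>}" using pd by auto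
  finally have "carrier ?Q \<subseteq> {\<one>\<^bsub>?Q\<^esub>, ?\<pi> a, ?\<pi> b, ?\<pi> a \<otimes>\<^bsub>?Q\<^esub> ?\<pi> b}"
    using klein_gen[OF grpQ Ain aa bb cc abc] by simp
  then have "card (carrier ?Q) \<le> card {\<one>\<^bsub>?Q\<^esub>, ?\<pi> a, ?\<pi> b, ?\<pi> a \<otimes>\<^bsub>?Q\<^esub> ?\<pi> b}"
    by (intro card_mono) auto
  also have "\<dots> \<le> 4"
  proof -
    have "card (set [\<one>\<^bsub>?Q\<^esub>, ?\<pi> a, ?\<pi> b, ?\<pi> a \<otimes>\<^bsub>?Q\<^esub> ?\<pi> b]) \<le> length [\<one>\<^bsub>?Q\<^esub>, ?\<pi> a, ?\<pi> b, ?\<pi> a \<otimes>\<^bsub>?Q\<^esub> ?\<pi> b]"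
      by (rule card_length)
    then show ?thesis by simp
  qed
  finally have cQ: "card (carrier ?Q) \<le> 4" .
  have "card (rcosets\<^bsub>G\<^esub> R) * card R = order G" by (rule G.lagrange[OF Rsub])
  moreover have "carrier ?Q = rcosets\<^bsub>G\<^esub> R" by (simp add: FactGroup_def)
  ultimately have "card (carrier ?Q) * n = 8 * n" using cardR ordG cardH by simp
  with cQ have "n = 0" by (cases "n = 0") auto
  then have "card H = 0" using cardH by simp
  moreover have "finite H" using assms(2) HG by (meson finite_subset subsetI)
  ultimately show False using H1 by simp
qed

end
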